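(* Let $G$ be a simple graph with $n$ vertices and $m$ edges, and let $\hat{G}$ be a $1$-regular conflict graph on $E(G)$. If $m<2n$, then there exists a vertex $v$ of $G$ such that $\partial_G v$ is conflict-free, i.e. independent in $\hat{G}$.
   Context: A conflict graph on $E(G)$ is a graph $\hat{G}$ with $V(\hat{G})=E(G)$; two edges are conflicting if they are adjacent in $\hat{G}$, and a set of edges is conflict-free if it is independent in $\hat{G}$. For a vertex $v$, $\partial_G v$ denotes the set of edges of $G$ incident with $v$. *)

theory Defs
  imports Main
begin

definition simple_graph :: "'a set \<Rightarrow> 'a set set \<Rightarrow> bool" where
  "simple_graph V E \<longleftrightarrow> finite V \<and> (\<forall>e\<in>E. e \<subseteq> V \<and> card e = 2)"

definition incident_edges :: "'a set set \<Rightarrow> 'a \<Rightarrow> 'a set set" where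
  "incident_edges E v = {e \<in> E. v \<in> e}"

definition conflict_graph :: "'a set set \<Rightarrow> ('a set \<Rightarrow> 'a set \<Rightarrow> bool) \<Rightarrow> bool" where
  "conflict_graph E C \<longleftrightarrow>
     (\<forall>e f. C e f \<longrightarrow> e \<in> E \<and> f \<in> E) \<and>
     (\<forall>e f. C e f \<longrightarrow> C f e) \<and>
     (\<forall>e. \<not> C e e)"

definition regular_conflict_graph :: "nat \<Rightarrow> 'a set set \<Rightarrow> ('a set \<Rightarrow> 'a set \<Rightarrow> bool) \<Rightarrow> bool" where
  "regular_conflict_graph k E C \<longleftrightarrow>
     conflict_graph E C \<and> (\<forall>e\<in>E. card {f \<in> E. C e f} = k)"

definition conflict_free :: "('a set \<Rightarrow> 'a set \<Rightarrow> bool) \<Rightarrow> 'a set set \<Rightarrow> bool" where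
  "conflict_free C F \<longleftrightarrow> (\<forall>e\<in>F. \<forall>f\<in>F. \<not> C e f)"

end

theory Submission
  imports Defs
begin

theorem proposition9:
  fixes V :: "'a set" and E :: "'a set set" and C :: "'a set \<Rightarrow> 'a set \<Rightarrow> bool"
  assumes "simple_graph V E"
    and "regular_conflict_graph 1 E C"
    and "card E < 2 * card V"
  shows "\<exists>v\<in>V. conflict_free C (incident_edges E v)"
proof (rule ccontr)
  assume nc: "\<not> ?thesis"
  have finV: "finite V" and Esub: "\<And>e. e \<in> E \<Longrightarrow> e \<subseteq> V \<and> card e = 2"
    using assms(1) unfolding simple_graph_def by auto
  have finE: "finite E"
    by (rule finite_subset[of E "Pow V"]) (use Esub finV in auto)
  have CE: "\<And>e f. C e f \<Longrightarrow> e \<in> E \<and> f \<in> E" and Csym: "\<And>e f. C e f \<Longrightarrow> C f e"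
    and Cirr: "\<And>e. \<not> C e e" and reg: "\<And>e. e \<in> E \<Longrightarrow> card {f \<in> E. C e f} = 1"
    using assms(2) unfolding regular_conflict_graph_def conflict_graph_def by auto
  have uniq: "\<And>e f g. C e f \<Longrightarrow> C e g \<Longrightarrow> f = g"
  proof -
    fix e f g assume a: "C e f" "C e g"
    then have "e \<in> E" using CE by blast
    from card_1_singletonE[OF reg[OF this]] obtain h where "{f \<in> E. C e f} = {h}" .
    note hh = this
    have "f \<in> {f \<in> E. C e f}" "g \<in> {f \<in> E. C e f}" using a CE by simp_all
    then show "f = g" unfolding hh by simp
  qed
  have ex: "\<And>e. e \<in> E \<Longrightarrow> \<exists>f. C e f"
  proof -
    fix e assume "e \<in> E"
    from card_1_singletonE[OF reg[OF this]] obtain h where "{f \<in> E. C e f} = {h}" .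
    then show "\<exists>f. C e f" by blast
  qed
  define P where "P = {{e,f} | e f. C e f}"
  have Pform: "\<And>p x y. p \<in> P \<Longrightarrow> x \<in> p \<Longrightarrow> C x y \<Longrightarrow> p = {x, y}"
  proof -
    fix p x y assume a: "p \<in> P" "x \<in> p" "C x y"
    then obtain e f where p: "p = {e,f}" "C e f" unfolding P_def by blast
    show "p = {x,y}"
    proof (cases "x = e")
      case True then show ?thesis using p a uniq by blast
    next
      case False then have "x = f" using a p by blast
      then show ?thesis using p a uniq Csym by blast
    qed
  qed
  have UP: "\<Union>P = E"
  proof
    show "\<Union>P \<subseteq> E" unfolding P_def using CE by blast
    show "E \<subseteq> \<Union>P"
    proof
      fix e assume "e \<in> E"
      then obtain f where "C e f" using ex by blast
      then show "e \<in> \<Union>P" unfolding P_def by blast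
    qed
  qed
  have Pdisj: "pairwise disjnt P"
    unfolding pairwise_def disjnt_def
  proof (intro ballI impI)
    fix p q assume pq: "p \<in> P" "q \<in> P" "p \<noteq> q"
    show "p \<inter> q = {}"
    proof (rule ccontr)
      assume "p \<inter> q \<noteq> {}"
      then obtain x where x: "x \<in> p" "x \<in> q" by blast
      then have "x \<in> E" using pq UP by blast
      then obtain y where "C x y" using ex by blast
      then show False using Pform[OF pq(1) x(1)] Pform[OF pq(2) x(2)] pq(3) by simp
    qed
  qed
  have Pcard: "\<And>p. p \<in> P \<Longrightarrow> card p = 2"
  proof -
    fix p assume "p \<in> P"
    then obtain e f where ef: "p = {e,f}" "C e f" unfolding P_def by blast
    then have "e \<noteq> f" using Cirr by metis
    then show "card p = 2" using ef by simp
  qed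
  have finP: "finite P" using finE UP by (metis finite_UnionD)
  have "card E = sum card P"
    using card_Union_disjoint[OF Pdisj] Pcard UP
    by (metis card.infinite finE zero_neq_numeral)
  also have "\<dots> = 2 * card P" using Pcard by simp
  finally have cE: "card E = 2 * card P" .
  have bad: "\<forall>v\<in>V. \<exists>e f. C e f \<and> v \<in> e \<and> v \<in> f"
    using nc unfolding conflict_free_def incident_edges_def by blast
  have bad2: "\<forall>v\<in>V. \<exists>p. C (fst p) (snd p) \<and> v \<in> fst p \<and> v \<in> snd p"
  proof
    fix v assume "v \<in> V"
    then obtain e f where "C e f \<and> v \<in> e \<and> v \<in> f" using bad by blast
    then show "\<exists>p. C (fst p) (snd p) \<and> v \<in> fst p \<and> v \<in> snd p" by (intro exI[of _ "(e,f)"]) simp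
  qed
  obtain g where g0: "\<forall>v\<in>V. C (fst (g v)) (snd (g v)) \<and> v \<in> fst (g v) \<and> v \<in> snd (g v)"
    using bchoice[OF bad2] by blast
  have g: "\<And>v. v \<in> V \<Longrightarrow> C (fst (g v)) (snd (g v)) \<and> v \<in> fst (g v) \<and> v \<in> snd (g v)"
    using g0 by blast
  define h where "h v = {fst (g v), snd (g v)}" for v
  have "inj_on h V"
  proof (rule inj_onI)
    fix v w assume vw: "v \<in> V" "w \<in> V" "h v = h w"
    let ?e = "fst (g v)" and ?f = "snd (g v)"
    have gv: "C ?e ?f" "v \<in> ?e" "v \<in> ?f" using g[OF vw(1)] by auto
    have "w \<in> ?e \<and> w \<in> ?f"
    proof -
      have gw: "C (fst (g w)) (snd (g w))" "w \<in> fst (g w)" "w \<in> snd (g w)" using g[OF vw(2)] by auto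
      have "{fst (g w), snd (g w)} = {?e, ?f}" using vw(3) unfolding h_def by simp
      moreover have "fst (g w) \<noteq> snd (g w)" using gw Cirr by metis
      ultimately show ?thesis using gw by (metis doubleton_eq_iff)
    qed
    have "?e \<noteq> ?f" using gv Cirr by metis
    moreover have ce: "card ?e = 2" "card ?f = 2" using gv CE Esub by auto
    ultimately have "card (?e \<inter> ?f) \<le> 1"
    proof -
      assume ne: "?e \<noteq> ?f" and c: "card ?e = 2" "card ?f = 2"
      show ?thesis
      proof (rule ccontr)
        assume "\<not> card (?e \<inter> ?f) \<le> 1"
        then have "card (?e \<inter> ?f) \<ge> 2" by simp
        moreover have "finite ?e" using c card.infinite by fastforce
        moreover have "finite ?f" using c card.infinite by fastforce
        ultimately have "?e \<inter> ?f = ?e" "?e \<inter> ?f = ?f"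
          using c by (metis Int_lower1 Int_lower2 card_seteq)+
        then show False using ne by simp
      qed
    qed
    moreover have "finite ?e" using ce(1) card.infinite by fastforce
    then have "finite (?e \<inter> ?f)" by simp
    ultimately show "v = w" using gv \<open>w \<in> ?e \<and> w \<in> ?f\<close>
      by (metis IntI card_le_Suc0_iff_eq One_nat_def)
  qed
  moreover have "h ` V \<subseteq> P" unfolding h_def P_def using g by blast
  ultimately have "card V \<le> card P" using finP by (metis card_inj_on_le)
  then show False using assms(3) cE by simp
qed

end
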